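(* Let $g(x)\in A$. If $f(x)=x^2+ax-1$ for some $a\in\mathbb{F}$, then $M_g^T=M_g$. If $f(x)=x^m\pm1$, then $M_g^T=M_h$, where $h(x)=g(x^{-1})\in A$ (here $x$ is invertible in $A$), equivalently $h(x)=g^R(x)/x^{\deg g}$.
   Context: Let $\mathbb{F}$ be a finite field, $f(x)=x^m+\sum_{i=0}^{m-1}f_ix^i\in\mathbb{F}[x]$ monic of degree $m$, $A=\mathbb{F}[x]/\langle f(x)\rangle$, elements identified with polynomials of degree $<m$. $M_x$ is the $m\times m$ companion matrix of $f$: its $i$-th row is the unit vector $e_{i+1}$ for $1\le i\le m-1$ and its last row is $(-f_0,\ldots,-f_{m-1})$. For $g(x)=\sum_{i=0}^{m-1}a_ix^i\in A$, $M_g=\sum_{i=0}^{m-1}a_iM_x^i$. For $g\in\mathbb{F}[x]$, $g^R(x)=x^{\deg g}g(x^{-1})$ is its reciprocal polynomial. *)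

theory Defs
  imports "Jordan_Normal_Form.Matrix" "HOL-Computational_Algebra.Polynomial"
begin

definition companion_mat :: "'a::comm_ring_1 poly \<Rightarrow> 'a mat" where
  "companion_mat f = (let m = degree f in
     mat m m (\<lambda>(i,j). if i + 1 < m then (if j = i + 1 then 1 else 0)
                      else - coeff f j))"

definition mult_mat :: "'a::comm_ring_1 poly \<Rightarrow> 'a poly \<Rightarrow> 'a mat" where
  "mult_mat f g = (let m = degree f in
     mat m m (\<lambda>(i,j). \<Sum>k<m. coeff g k * (companion_mat f ^\<^sub>m k) $$ (i,j)))"

end

theory Submission
  imports Defs
begin


lemma poly_mod_sum: "finite A \<Longrightarrow> (sum h A) mod (f::'a::field poly) = sum (\<lambda>i. h i mod f) A"
  by (induction A rule: finite_induct) (auto simp: poly_mod_add_left)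

lemma step_mod:
  fixes f p :: "'a::field poly"
  assumes mon: "lead_coeff f = 1" and m: "degree f = m" "m \<ge> 1" and p: "degree p < m"
  shows "(pCons 0 p) mod f = pCons 0 p - smult (coeff p (m-1)) f"
proof -
  let ?r = "pCons 0 p - smult (coeff p (m-1)) f"
  have "\<forall>n\<ge>m. coeff ?r n = 0"
  proof (intro allI impI)
    fix n assume n: "m \<le> n"
    show "coeff ?r n = 0"
    proof (cases "n = m")
      case True
      then show ?thesis using mon m by (cases n) (auto simp: coeff_pCons)
    next
      case False
      then have "n > m" using n by simp
      then show ?thesis using m p coeff_eq_0[of f n] coeff_eq_0[of p "n-1"]
        by (cases n) (auto simp: coeff_pCons)
    qed
  qed
  then have "degree ?r \<le> m - 1"
    using m by (intro degree_le) auto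
  then have "degree ?r < m" using m by linarith
  then have "?r mod f = ?r" using m by (simp add: mod_poly_less)
  moreover have "?r mod f = pCons 0 p mod f"
    by (simp add: poly_mod_diff_left mod_smult_left)
  ultimately show ?thesis by simp
qed

lemma pCons0_mod: "pCons 0 a mod (f::'a::field poly) = pCons 0 (a mod f) mod f"
proof -
  have e: "\<And>b::'a poly. pCons 0 b = [:0,1:] * b"
    by (simp only: mult_pCons_left smult_0_left add_0 mult_1_left one_pCons[symmetric] pCons_0_0)
  show ?thesis using e[of a] e[of "a mod f"] mod_mult_right_eq[of "[:0,1:]" a f] by simp
qed

lemma companion_carrier: "companion_mat f \<in> carrier_mat (degree f) (degree f)"
  by (simp add: companion_mat_def Let_def)

lemma companion_entry: "i < degree f \<Longrightarrow> j < degree f \<Longrightarrow> companion_mat f $$ (i,j) =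
   (if i + 1 < degree f then (if j = i + 1 then 1 else 0) else - coeff f j)"
  by (simp add: companion_mat_def Let_def)

lemma companion_pow:
  fixes f :: "'a::field poly"
  assumes mon: "lead_coeff f = 1" and m: "degree f = m" "m \<ge> 1" and i: "i < m"
  shows "j < m \<Longrightarrow> (companion_mat f ^\<^sub>m k) $$ (i,j) = coeff (monom 1 (i+k) mod f) j"
proof (induction k arbitrary: j)
  case 0
  have "monom 1 i mod f = monom (1::'a) i" using i m by (intro mod_poly_less) (simp add: degree_monom_eq)
  then show ?case using 0 i m companion_carrier[of f] by (simp add: coeff_monom)
next
  case (Suc k)
  let ?A = "companion_mat f"
  let ?p = "monom 1 (i+k) mod f"
  have A: "?A \<in> carrier_mat m m" using companion_carrier[of f] m by simp
  have f0: "f \<noteq> 0" using m by auto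
  have dp: "degree ?p < m"
    using degree_mod_less[OF f0, of "monom 1 (i+k)"] m by auto
  have "(?A ^\<^sub>m Suc k) $$ (i,j) = (\<Sum>l\<in>{0..<m}. (?A ^\<^sub>m k) $$ (i,l) * ?A $$ (l,j))"
    using A i Suc.prems by (simp add: scalar_prod_def)
  also have "\<dots> = (\<Sum>l\<in>{0..<m}. coeff ?p l * ?A $$ (l,j))"
    using Suc.IH by (intro sum.cong) auto
  also have "\<dots> = (\<Sum>l\<in>{0..<m-1}. coeff ?p l * ?A $$ (l,j)) + coeff ?p (m-1) * ?A $$ (m-1,j)"
  proof -
    have "{0..<m} = {0..<Suc (m-1)}" using m by simp
    then show ?thesis by (simp only: sum.atLeast0_lessThan_Suc)
  qed
  also have "(\<Sum>l\<in>{0..<m-1}. coeff ?p l * ?A $$ (l,j)) = (\<Sum>l\<in>{0..<m-1}. if l + 1 = j then coeff ?p l else 0)"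
    using m Suc.prems by (intro sum.cong) (auto simp: companion_entry)
  also have "\<dots> = (if j = 0 then 0 else coeff ?p (j - 1))"
  proof (cases j)
    case 0 then show ?thesis by simp
  next
    case (Suc j')
    then have "(\<Sum>l\<in>{0..<m-1}. if l + 1 = j then coeff ?p l else 0) = (\<Sum>l\<in>{0..<m-1}. if l = j' then coeff ?p l else 0)"
      by (intro sum.cong) auto
    also have "\<dots> = coeff ?p j'" using Suc Suc.prems by (simp add: sum.delta')
    finally show ?thesis using Suc by simp
  qed
  also have "?A $$ (m-1,j) = - coeff f j" using m Suc.prems by (simp add: companion_entry)
  finally have "(?A ^\<^sub>m Suc k) $$ (i,j) = (if j = 0 then 0 else coeff ?p (j - 1)) + coeff ?p (m - 1) * - coeff f j" .
  moreover have "monom 1 (i + Suc k) mod f = pCons 0 ?p - smult (coeff ?p (m-1)) f"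
    using pCons0_mod[of "monom 1 (i+k)" f] step_mod[OF mon m dp]
    by (simp add: monom_Suc)
  ultimately show ?case by (cases j) (auto simp: coeff_pCons)
qed

lemma g_sum: "degree (g::'a::comm_ring_1 poly) < m \<Longrightarrow> (\<Sum>k<m. monom (coeff g k) k) = g"
  using poly_as_sum_of_monoms'[of g "m-1"]
  by (cases m) (auto simp: lessThan_Suc_atMost)

lemma mult_mat_entry_sum:
  fixes f g :: "'a::field poly"
  assumes mon: "lead_coeff f = 1" and m: "degree f = m" "m \<ge> 1"
    and i: "i < m" and j: "j < m"
  shows "mult_mat f g $$ (i,j) = (\<Sum>k<m. coeff g k * coeff (monom 1 (i+k) mod f) j)"
proof -
  have "mult_mat f g $$ (i,j) = (\<Sum>k<m. coeff g k * (companion_mat f ^\<^sub>m k) $$ (i,j))"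
    using m i j by (simp add: mult_mat_def Let_def)
  also have "\<dots> = (\<Sum>k<m. coeff g k * coeff (monom 1 (i+k) mod f) j)"
    using companion_pow[OF mon m i j] by simp
  finally show ?thesis .
qed

lemma mult_mat_entry:
  fixes f g :: "'a::field poly"
  assumes mon: "lead_coeff f = 1" and m: "degree f = m" "m \<ge> 1" and g: "degree g < m"
    and i: "i < m" and j: "j < m"
  shows "mult_mat f g $$ (i,j) = coeff ((monom 1 i * g) mod f) j"
proof -
  have "mult_mat f g $$ (i,j) = (\<Sum>k<m. coeff g k * (companion_mat f ^\<^sub>m k) $$ (i,j))"
    using m i j by (simp add: mult_mat_def Let_def)
  also have "\<dots> = (\<Sum>k<m. coeff g k * coeff (monom 1 (i+k) mod f) j)"
    using companion_pow[OF mon m i j] by simp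
  also have "\<dots> = coeff (\<Sum>k<m. smult (coeff g k) (monom 1 (i+k) mod f)) j"
    by (simp add: coeff_sum)
  also have "(\<Sum>k<m. smult (coeff g k) (monom 1 (i+k) mod f)) = (\<Sum>k<m. monom 1 i * monom (coeff g k) k) mod f"
  proof -
    have "\<And>k. monom 1 i * monom (coeff g k) k = smult (coeff g k) (monom 1 (i+k))"
      by (simp add: mult_monom smult_monom)
    then show ?thesis by (simp add: poly_mod_sum mod_smult_left)
  qed
  also have "(\<Sum>k<m. monom 1 i * monom (coeff g k) k) = monom 1 i * g"
    by (subst (2) g_sum[OF g, symmetric]) (simp only: sum_distrib_left)
  finally show ?thesis .
qed

lemma mult_mat_dims: "dim_row (mult_mat f g) = degree f" "dim_col (mult_mat f g) = degree f"
  by (simp_all add: mult_mat_def Let_def)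

lemma monom1_mult: "monom 1 1 * p = pCons 0 (p::'a::comm_ring_1 poly)"
proof -
  have "monom (1::'a) 1 = [:0,1:]" by (simp add: monom_Suc one_pCons)
  then show ?thesis
    by (simp only: mult_pCons_left smult_0_left add_0 mult_1_left one_pCons[symmetric] pCons_0_0)
qed

lemma part1:
  fixes f g :: "'a::field poly"
  assumes f: "f = [:-1, a, 1:]" and g: "degree g < degree f"
  shows "transpose_mat (mult_mat f g) = mult_mat f g"
proof -
  have df: "degree f = 2" and mon: "lead_coeff f = 1" using f by simp_all
  have g2: "degree g < 2" using g df by simp
  have e: "mult_mat f g $$ (i,j) = coeff ((monom 1 i * g) mod f) j" if "i < 2" "j < 2" for i j
    using mult_mat_entry[OF mon df _ g2 that] by simp
  have gm: "g mod f = g" using g by (simp add: mod_poly_less)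
  have x: "(monom 1 1 * g) mod f = pCons 0 g - smult (coeff g 1) f"
    using step_mod[OF mon df _ g2] monom1_mult[of g] by simp
  have "mult_mat f g $$ (0,1) = mult_mat f g $$ (1,0)"
    using e[of 0 1] e[of 1 0] gm x f by simp
  then show ?thesis
    by (intro eq_matI) (auto simp: mult_mat_dims df less_2_cases_iff)
qed

lemma fc_deg:
  fixes c :: "'a::field"
  assumes fc: "f = monom 1 m - [:c:]" and m: "m \<ge> 1"
  shows "degree f = m" "lead_coeff f = 1"
proof -
  have "degree (- [:c:]) < degree (monom (1::'a) m)" using m by (simp add: degree_monom_eq)
  then have "degree (monom (1::'a) m + - [:c:]) = degree (monom (1::'a) m)" by (rule degree_add_eq_left)
  then have "degree f = degree (monom (1::'a) m)" unfolding fc by (simp only: diff_conv_add_uminus)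
  then show d: "degree f = m" by (simp add: degree_monom_eq)
  show "lead_coeff f = 1" unfolding d using m by (cases m) (simp_all add: fc coeff_pCons)
qed

lemma xpow_mod:
  fixes c :: "'a::field"
  assumes fc: "f = monom 1 m - [:c:]" and m: "m \<ge> 1" and n: "n < 2 * m"
  shows "monom 1 n mod f = (if n < m then monom 1 n else smult c (monom 1 (n - m)))"
proof (cases "n < m")
  case True
  then show ?thesis using fc_deg[OF fc m] by (simp add: mod_poly_less degree_monom_eq)
next
  case False
  have e: "monom 1 n = smult c (monom 1 (n - m)) + monom 1 (n - m) * f"
    using False unfolding fc by (simp add: algebra_simps mult_monom smult_monom)
  have "degree (smult c (monom (1::'a) (n - m))) < degree f"
  proof -
    have "degree (smult c (monom (1::'a) (n - m))) \<le> n - m"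
      using degree_smult_le[of c "monom (1::'a) (n - m)"] degree_monom_le[of "1::'a" "n - m"] by linarith
    then show ?thesis using fc_deg[OF fc m] n by linarith
  qed
  then show ?thesis using False by (simp add: e mod_poly_less)
qed

lemma entry2:
  fixes c :: "'a::field"
  assumes fc: "f = monom 1 m - [:c:]" and m: "m \<ge> 1" and g: "degree g < m"
    and i: "i < m" and j: "j < m"
  shows "mult_mat f g $$ (i,j) = (if i \<le> j then coeff g (j - i) else c * coeff g (j + m - i))"
proof -
  note d = fc_deg[OF fc m]
  have "mult_mat f g $$ (i,j) = (\<Sum>k<m. coeff g k * coeff (monom 1 (i+k) mod f) j)"
    by (rule mult_mat_entry_sum[OF d(2) d(1) m i j])
  also have "\<dots> = (\<Sum>k<m. if i \<le> j then (if k = j - i then coeff g k else 0)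
                          else (if k = j + m - i then c * coeff g k else 0))"
  proof (intro sum.cong refl)
    fix k assume k: "k \<in> {..<m}"
    then have "i + k < 2 * m" using i by simp
    then show "coeff g k * coeff (monom 1 (i+k) mod f) j = (if i \<le> j then (if k = j - i then coeff g k else 0)
                          else (if k = j + m - i then c * coeff g k else 0))"
      using k i j by (auto simp: xpow_mod[OF fc m] coeff_monom)
  qed
  also have "\<dots> = (if i \<le> j then coeff g (j - i) else c * coeff g (j + m - i))"
    using i j by (auto simp: sum.delta)
  finally show ?thesis .
qed

lemma inv_pow:
  fixes f u w :: "'a::field poly"
  assumes u: "(monom 1 1 * u) mod f = 1" and w: "(monom 1 k * w) mod f = 1"
  shows "u ^ k mod f = w mod f"
proof -
  have "u ^ k mod f = (u ^ k * ((monom 1 k * w) mod f)) mod f" using w by simp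
  also have "\<dots> = ((monom 1 1 * u) ^ k * w) mod f"
    by (simp add: mod_mult_right_eq power_mult_distrib monom_power mult_ac)
  also have "\<dots> = ((((monom 1 1 * u) mod f) ^ k mod f) * w) mod f"
    by (simp add: power_mod mod_mult_left_eq)
  also have "\<dots> = w mod f" using u by (simp add: mod_mult_left_eq)
  finally show ?thesis .
qed

lemma cancel_pow:
  fixes f u :: "'a::field poly"
  assumes u: "(monom 1 1 * u) mod f = 1" and k: "k \<le> d"
  shows "(monom 1 (d - k) * u ^ d) mod f = u ^ k mod f"
proof -
  have "monom 1 (d - k) * u ^ d = (monom 1 1 * u) ^ (d - k) * u ^ k"
    using k by (simp add: power_mult_distrib monom_power mult_ac flip: power_add)
  then have "(monom 1 (d - k) * u ^ d) mod f = ((((monom 1 1 * u) mod f) ^ (d - k) mod f) * u ^ k) mod f"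
    by (simp add: power_mod mod_mult_left_eq)
  also have "\<dots> = u ^ k mod f" using u by (simp add: mod_mult_left_eq)
  finally show ?thesis .
qed

lemma pcompose_as_sum:
  "degree (g::'a::comm_ring_1 poly) \<le> n \<Longrightarrow> pcompose g u = (\<Sum>k\<le>n. smult (coeff g k) (u ^ k))"
proof -
  have pm: "pcompose (monom c k) u = smult c (u ^ k)" for c :: 'a and k
  proof -
    have p1: "pcompose [:0,1:] u = u" by (simp add: pcompose_pCons)
    have "pcompose ([:0,1:] ^ k) u = u ^ k"
      by (induction k) (simp_all only: power_0 power_Suc pcompose_1 pcompose_mult p1)
    then show ?thesis by (simp add: monom_altdef pcompose_smult)
  qed
  assume "degree g \<le> n"
  then have "pcompose g u = pcompose (\<Sum>k\<le>n. monom (coeff g k) k) u"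
    by (simp add: poly_as_sum_of_monoms')
  also have "\<dots> = (\<Sum>k\<le>n. smult (coeff g k) (u ^ k))"
    by (simp add: pcompose_sum pm)
  finally show ?thesis .
qed

lemma u_pow_mod:
  fixes c :: "'a::field"
  assumes fc: "f = monom 1 m - [:c:]" and m: "m \<ge> 1" and cc: "c * c = 1"
    and u: "(monom 1 1 * u) mod f = 1" and k: "k < m"
  shows "u ^ k mod f = (if k = 0 then 1 else smult c (monom 1 (m - k)))"
proof -
  note d = fc_deg[OF fc m]
  let ?w = "(if k = 0 then 1 else smult c (monom 1 (m - k))) :: 'a poly"
  have one: "(1::'a poly) mod f = 1" using d m by (simp add: mod_poly_less)
  have w: "(monom 1 k * ?w) mod f = 1"
  proof (cases "k = 0")
    case True then show ?thesis using one by simp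
  next
    case False
    have "monom 1 k * ?w = smult c (monom 1 m)"
      using False k by (simp add: mult_monom smult_monom)
    moreover have "monom 1 m mod f = [:c:]"
      using xpow_mod[OF fc m, of m] m by (simp add: monom_0)
    ultimately show ?thesis using cc by (simp add: mod_smult_left)
  qed
  have "degree ?w < degree f"
  proof (cases "k = 0")
    case True then show ?thesis using d m by simp
  next
    case False
    have "degree (smult c (monom (1::'a) (m - k))) \<le> m - k"
      using degree_smult_le[of c "monom (1::'a) (m - k)"] degree_monom_le[of "1::'a" "m - k"] by linarith
    then show ?thesis using False d m by (simp only: if_False)
  qed
  then have "?w mod f = ?w" by (rule mod_poly_less)
  then show ?thesis using inv_pow[OF u w] by simp
qed

lemma h_coeff:
  fixes c :: "'a::field"
  assumes fc: "f = monom 1 m - [:c:]" and m: "m \<ge> 1" and cc: "c * c = 1"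
    and u: "(monom 1 1 * u) mod f = 1" and g: "degree g < m" and t: "t < m"
  shows "coeff (pcompose g u mod f) t = (if t = 0 then coeff g 0 else c * coeff g (m - t))"
proof -
  have "pcompose g u mod f = (\<Sum>k\<le>m-1. smult (coeff g k) (u ^ k)) mod f"
    using pcompose_as_sum[of g "m-1" u] g by simp
  also have "\<dots> = (\<Sum>k\<le>m-1. smult (coeff g k) (u ^ k mod f))"
    by (simp add: poly_mod_sum mod_smult_left)
  finally have "coeff (pcompose g u mod f) t = (\<Sum>k\<le>m-1. coeff g k * coeff (u ^ k mod f) t)"
    by (simp add: coeff_sum)
  also have "\<dots> = (\<Sum>k\<le>m-1. if t = 0 then (if k = 0 then coeff g k else 0)
                 else (if k = m - t then c * coeff g k else 0))"
  proof (intro sum.cong refl)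
    fix k assume k: "k \<in> {..m-1}"
    then have km: "k < m" using m by auto
    show "coeff g k * coeff (u ^ k mod f) t = (if t = 0 then (if k = 0 then coeff g k else 0)
                 else (if k = m - t then c * coeff g k else 0))"
      using km t by (auto simp: u_pow_mod[OF fc m cc u km] coeff_monom)
  qed
  also have "\<dots> = (if t = 0 then coeff g 0 else c * coeff g (m - t))"
    using t by (auto simp: sum.delta)
  finally show ?thesis .
qed

lemma reflect_sum: "reflect_poly g = (\<Sum>k\<le>degree g. monom (coeff g k) (degree g - k))"
proof (rule poly_eqI)
  fix n
  let ?d = "degree g"
  have "coeff (\<Sum>k\<le>?d. monom (coeff g k) (?d - k)) n = (\<Sum>k\<le>?d. if k = ?d - n \<and> n \<le> ?d then coeff g k else 0)"
    unfolding coeff_sum by (intro sum.cong refl) (auto simp: coeff_monom)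
  also have "\<dots> = (if n \<le> ?d then coeff g (?d - n) else 0)"
    by (cases "n \<le> ?d") (auto simp: sum.delta)
  finally show "coeff (reflect_poly g) n = coeff (\<Sum>k\<le>?d. monom (coeff g k) (?d - k)) n"
    by (simp add: coeff_reflect_poly)
qed

lemma reflect_part:
  fixes f g u :: "'a::field poly"
  assumes u: "(monom 1 1 * u) mod f = 1"
  shows "pcompose g u mod f = (reflect_poly g * u ^ degree g) mod f"
proof -
  let ?d = "degree g"
  have "reflect_poly g * u ^ ?d = (\<Sum>k\<le>?d. smult (coeff g k) (monom 1 (?d - k) * u ^ ?d))"
    unfolding reflect_sum by (simp add: sum_distrib_right smult_monom_mult)
  then have "(reflect_poly g * u ^ ?d) mod f = (\<Sum>k\<le>?d. smult (coeff g k) ((monom 1 (?d - k) * u ^ ?d) mod f))"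
    by (simp add: poly_mod_sum mod_smult_left)
  also have "\<dots> = (\<Sum>k\<le>?d. smult (coeff g k) (u ^ k mod f))"
    by (intro sum.cong refl) (simp add: cancel_pow[OF u])
  also have "\<dots> = (\<Sum>k\<le>?d. smult (coeff g k) (u ^ k)) mod f"
    by (simp add: poly_mod_sum mod_smult_left)
  also have "\<dots> = pcompose g u mod f"
    using pcompose_as_sum[of g ?d u] by simp
  finally show ?thesis by simp
qed

lemma part2:
  fixes c :: "'a::field"
  assumes fc: "f = monom 1 m - [:c:]" and m: "m \<ge> 1" and cc: "c * c = 1"
    and u: "(monom 1 1 * u) mod f = 1" and g: "degree g < m"
  shows "transpose_mat (mult_mat f g) = mult_mat f (pcompose g u mod f)"
proof -
  note d = fc_deg[OF fc m]
  let ?h = "pcompose g u mod f"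
  have f0: "f \<noteq> 0" using d m by auto
  have dh: "degree ?h < m" using degree_mod_less[OF f0, of "pcompose g u"] d m by auto
  have hc: "\<And>t. t < m \<Longrightarrow> coeff ?h t = (if t = 0 then coeff g 0 else c * coeff g (m - t))"
    by (rule h_coeff[OF fc m cc u g])
  show ?thesis
  proof (rule eq_matI)
    fix i j assume i: "i < dim_row (mult_mat f ?h)" and j: "j < dim_col (mult_mat f ?h)"
    then have i: "i < m" and j: "j < m" by (simp_all add: mult_mat_dims d)
    have l: "transpose_mat (mult_mat f g) $$ (i,j) = (if j \<le> i then coeff g (i - j) else c * coeff g (i + m - j))"
      using i j entry2[OF fc m g j i] by (simp add: mult_mat_dims d)
    have r: "mult_mat f ?h $$ (i,j) = (if i \<le> j then coeff ?h (j - i) else c * coeff ?h (j + m - i))"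
      by (rule entry2[OF fc m dh i j])
    show "transpose_mat (mult_mat f g) $$ (i,j) = mult_mat f ?h $$ (i,j)"
    proof (cases "i = j")
      case True then show ?thesis using l r hc[of 0] m by simp
    next
      case False
      show ?thesis
      proof (cases "i < j")
        case True
        then have "m - (j - i) = i + m - j" using j by simp
        then show ?thesis using l r hc[of "j - i"] True j by simp
      next
        case False
        then have lt: "j < i" using \<open>i \<noteq> j\<close> by simp
        then have "m - (j + m - i) = i - j" using i by simp
        moreover have "j + m - i < m" "j + m - i \<noteq> 0" using lt i by auto
        ultimately show ?thesis using l r hc[of "j + m - i"] lt cc
          by (simp add: mult.assoc[symmetric])
      qed
    qed
  qed (simp_all add: mult_mat_dims)
qed



theorem mainTheorem14:
  fixes f g :: "'a::{field,finite} poly"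
  assumes monic: "lead_coeff f = 1"
    and gA: "degree g < degree f"
  shows "(\<forall>a. f = [:-1, a, 1:] \<longrightarrow> transpose_mat (mult_mat f g) = mult_mat f g)
       \<and> (\<forall>m u. m \<ge> 1 \<and> (f = monom 1 m + 1 \<or> f = monom 1 m - 1)
              \<and> degree u < degree f \<and> (monom 1 1 * u) mod f = 1
           \<longrightarrow> transpose_mat (mult_mat f g) = mult_mat f (pcompose g u mod f)
             \<and> pcompose g u mod f = (reflect_poly g * u ^ degree g) mod f)"
proof (intro conjI allI impI)
  fix a assume "f = [:-1, a, 1:]"
  then show "transpose_mat (mult_mat f g) = mult_mat f g" using part1 gA by blast
next
  fix m u
  assume H: "m \<ge> 1 \<and> (f = monom 1 m + 1 \<or> f = monom 1 m - 1)
              \<and> degree u < degree f \<and> (monom 1 1 * u) mod f = 1"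
  then have m: "m \<ge> 1" and u: "(monom 1 1 * u) mod f = 1" by auto
  obtain c :: 'a where fc: "f = monom 1 m - [:c:]" and cc: "c * c = 1"
  proof (cases "f = monom 1 m + 1")
    case True
    then have "f = monom 1 m - [:-1:]" by (simp add: one_pCons)
    then show ?thesis using that[of "-1"] by simp
  next
    case False
    then have "f = monom 1 m - [:1:]" using H by (simp add: one_pCons)
    then show ?thesis using that[of 1] by simp
  qed
  have gm: "degree g < m" using gA fc_deg[OF fc m] by simp
  show "transpose_mat (mult_mat f g) = mult_mat f (pcompose g u mod f)"
    by (rule part2[OF fc m cc u gm])
  show "pcompose g u mod f = (reflect_poly g * u ^ degree g) mod f"
    by (rule reflect_part[OF u])
qed

end
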